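(* Let $C$ be a convex cone in $\mathbb{R}^n$ (usual topology) and $f:C\to\mathbb{R}$ a non-negative function that is positively homogeneous of degree $\alpha>0$. If $f$ is sub-convex, then $f$ is continuous on $\mathrm{ri}(C)$.
   Context: A cone is a subset $C$ with $\lambda C\subseteq C$ for all $\lambda>0$. $f$ is positively homogeneous of degree $\alpha$ if $f(\lambda x)=\lambda^{\alpha}f(x)$ for $x\in C$, $\lambda>0$. $f$ is sub-convex if every sublevel set $S_r(f)=\{x\in C: f(x)\le r\}$, $r\in\mathbb{R}$, is convex. $\mathrm{ri}(C)$ is the interior of $C$ relative to its affine hull. *)

theory Defs
  imports "HOL-Analysis.Analysis"
begin

definition pos_cone :: "'a::real_vector set \<Rightarrow> bool" where
  "pos_cone C \<longleftrightarrow> (\<forall>c::real. c > 0 \<longrightarrow> (\<forall>x\<in>C. c *\<^sub>R x \<in> C))"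

definition pos_homogeneous_on :: "'a::real_vector set \<Rightarrow> real \<Rightarrow> ('a \<Rightarrow> real) \<Rightarrow> bool" where
  "pos_homogeneous_on C \<alpha> f \<longleftrightarrow>
     (\<forall>x\<in>C. \<forall>c::real. c > 0 \<longrightarrow> f (c *\<^sub>R x) = c powr \<alpha> * f x)"

definition sublevel :: "'a set \<Rightarrow> ('a \<Rightarrow> real) \<Rightarrow> real \<Rightarrow> 'a set" where
  "sublevel C f r = {x\<in>C. f x \<le> r}"

definition sub_convex_on :: "'a::real_vector set \<Rightarrow> ('a \<Rightarrow> real) \<Rightarrow> bool" where
  "sub_convex_on C f \<longleftrightarrow> (\<forall>r::real. convex (sublevel C f r))"

end

theory Submission
  imports Defs
begin

lemma proj_exists:
  fixes L :: "(real ^ 'n) set"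
  assumes "subspace L"
  obtains P where "linear P" "\<And>y. P y \<in> L" "\<And>v. v \<in> L \<Longrightarrow> P v = v"
proof -
  have "\<exists>g. g ` UNIV \<subseteq> L \<and> linear g \<and> (\<forall>v\<in>L. g (id v) = v)"
    by (rule linear_exists_left_inverse_on) (use assms in \<open>auto simp: linear_iff\<close>)
  then show ?thesis using that by auto
qed

lemma g_props:
  fixes C :: "(real ^ 'n) set" and f :: "real ^ 'n \<Rightarrow> real" and \<alpha> :: real
  assumes cone: "pos_cone C" and cvx: "convex C"
    and nn: "\<forall>x\<in>C. f x \<ge> 0"
    and a: "\<alpha> > 0"
    and hom: "pos_homogeneous_on C \<alpha> f"
    and sc: "sub_convex_on C f"
  defines "g \<equiv> \<lambda>x. f x powr (1/\<alpha>)"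
  shows "convex_on C g"
proof -
  have gnn: "g x \<ge> 0" for x unfolding g_def by simp
  have ghom: "g (c *\<^sub>R x) = c * g x" if "x \<in> C" "c > 0" for x c
  proof -
    have "g (c *\<^sub>R x) = (c powr \<alpha> * f x) powr (1/\<alpha>)"
      using hom that unfolding g_def pos_homogeneous_on_def by simp
    also have "\<dots> = (c powr \<alpha>) powr (1/\<alpha>) * f x powr (1/\<alpha>)"
      using nn that by (simp add: powr_mult)
    also have "\<dots> = c * g x" using a that by (simp add: powr_powr g_def)
    finally show ?thesis .
  qed
  have fg: "f x = g x powr \<alpha>" if "x \<in> C" for x
    using nn that a unfolding g_def by (auto simp: powr_powr)
  have conv1: "convex {x\<in>C. g x \<le> 1}"
  proof -
    have "{x\<in>C. g x \<le> 1} = sublevel C f 1"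
    proof (auto simp: sublevel_def)
      fix x assume x: "x \<in> C" "g x \<le> 1"
      then have "g x powr \<alpha> \<le> 1 powr \<alpha>" using a gnn by (intro powr_mono2) auto
      then show "f x \<le> 1" using fg x by simp
    next
      fix x assume x: "x \<in> C" "f x \<le> 1"
      then have "f x powr (1/\<alpha>) \<le> 1 powr (1/\<alpha>)" using a nn by (intro powr_mono2) auto
      then show "g x \<le> 1" unfolding g_def by simp
    qed
    then show ?thesis using sc unfolding sub_convex_on_def by simp
  qed
  have sub: "x + y \<in> C \<and> g (x + y) \<le> g x + g y" if xy: "x \<in> C" "y \<in> C" for x y
  proof -
    have xyC: "x + y \<in> C"
    proof -
      have "(1/2) *\<^sub>R x + (1/2) *\<^sub>R y \<in> C" using cvx xy by (intro convexD) auto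
      then have "2 *\<^sub>R ((1/2) *\<^sub>R x + (1/2) *\<^sub>R y) \<in> C" using cone unfolding pos_cone_def by auto
      then show ?thesis by (simp add: algebra_simps)
    qed
    have "g (x + y) \<le> g x + g y + e" if e: "e > 0" for e
    proof -
      define A where "A = g x + e/2"
      define B where "B = g y + e/2"
      have A: "A > 0" and B: "B > 0" using gnn[of x] gnn[of y] e by (auto simp: A_def B_def)
      have x': "(1/A) *\<^sub>R x \<in> C" "g ((1/A) *\<^sub>R x) \<le> 1"
      proof -
        show "(1/A) *\<^sub>R x \<in> C" using cone xy A unfolding pos_cone_def by auto
        have "g ((1/A) *\<^sub>R x) = g x / A" using ghom[of x "1/A"] xy A by simp
        also have "\<dots> \<le> 1" using A e by (simp add: A_def)
        finally show "g ((1/A) *\<^sub>R x) \<le> 1" .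
      qed
      have y': "(1/B) *\<^sub>R y \<in> C" "g ((1/B) *\<^sub>R y) \<le> 1"
      proof -
        show "(1/B) *\<^sub>R y \<in> C" using cone xy B unfolding pos_cone_def by auto
        have "g ((1/B) *\<^sub>R y) = g y / B" using ghom[of y "1/B"] xy B by simp
        also have "\<dots> \<le> 1" using B e by (simp add: B_def)
        finally show "g ((1/B) *\<^sub>R y) \<le> 1" .
      qed
      have "(A/(A+B)) *\<^sub>R ((1/A) *\<^sub>R x) + (B/(A+B)) *\<^sub>R ((1/B) *\<^sub>R y) \<in> {x\<in>C. g x \<le> 1}"
      proof -
        have "A/(A+B) + B/(A+B) = 1" using A B by (simp add: add_divide_distrib[symmetric])
        then show ?thesis using conv1 x' y' A B by (intro convexD) auto
      qed
      moreover have "(A/(A+B)) *\<^sub>R ((1/A) *\<^sub>R x) + (B/(A+B)) *\<^sub>R ((1/B) *\<^sub>R y) = (1/(A+B)) *\<^sub>R (x + y)"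
        using A B by (simp add: algebra_simps)
      ultimately have "g ((1/(A+B)) *\<^sub>R (x + y)) \<le> 1" by simp
      then have "(1/(A+B)) * g (x+y) \<le> 1" using ghom[OF xyC, of "1/(A+B)"] A B by simp
      then have "g (x+y) \<le> A + B" using A B by (simp add: field_simps)
      then show ?thesis by (simp add: A_def B_def)
    qed
    then have "g (x + y) \<le> g x + g y" by (rule field_le_epsilon)
    with xyC show ?thesis by simp
  qed
  show ?thesis
  proof (rule convex_onI[OF _ cvx])
    fix t :: real and x y assume t: "0 < t" "t < 1" and xy: "x \<in> C" "y \<in> C"
    have tx: "t *\<^sub>R x \<in> C" and ty: "(1-t) *\<^sub>R y \<in> C" using cone t xy unfolding pos_cone_def by auto
    have "g ((1 - t) *\<^sub>R x + t *\<^sub>R y) \<le> g ((1-t) *\<^sub>R x) + g (t *\<^sub>R y)"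
      using sub cone t xy unfolding pos_cone_def by auto
    also have "\<dots> = (1-t) * g x + t * g y" using ghom xy t by simp
    finally show "g ((1 - t) *\<^sub>R x + t *\<^sub>R y) \<le> (1 - t) * g x + t * g y" .
  qed
qed


theorem mainTheorem8:
  fixes C :: "(real ^ 'n) set" and f :: "real ^ 'n \<Rightarrow> real" and \<alpha> :: real
  assumes "pos_cone C" and "convex C"
    and "\<forall>x\<in>C. f x \<ge> 0"
    and "\<alpha> > 0"
    and "pos_homogeneous_on C \<alpha> f"
    and "sub_convex_on C f"
  shows "continuous_on (rel_interior C) f"
proof (cases "C = {}")
  case True then show ?thesis by simp
next
  case False
  then obtain x0 where x0: "x0 \<in> C" by auto
  define g where "g = (\<lambda>x. f x powr (1/\<alpha>))"
  have gcv: "convex_on C g" unfolding g_def by (rule g_props[OF assms])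
  have x0': "2 *\<^sub>R x0 \<in> C" using assms(1) x0 unfolding pos_cone_def by auto
  have "2 *\<^sub>R x0 + (-1) *\<^sub>R (2 *\<^sub>R x0) \<in> affine hull C"
    by (rule mem_affine[OF affine_affine_hull]) (use x0 x0' in \<open>auto intro: hull_inc\<close>)
  then have "0 \<in> affine hull C" by simp
  then have L: "affine hull C = span C" by (rule affine_hull_span_0)
  obtain P where P: "linear P" "\<And>y. P y \<in> span C" "\<And>v. v \<in> span C \<Longrightarrow> P v = v"
    using proj_exists[of "span C"] by auto
  obtain U where U: "open U" "rel_interior C = U \<inter> span C"
    using openin_rel_interior[of C] unfolding L openin_open by auto
  define S where "S = P -` U"
  have bl: "bounded_linear P" using P(1) by (simp add: linear_conv_bounded_linear)
  have Sopen: "open S" unfolding S_def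
    by (rule continuous_open_vimage[OF U(1)]) (rule linear_continuous_at[OF bl])
  have SC: "S = P -` rel_interior C" using U(2) P(2) unfolding S_def by auto
  have Scvx: "convex S" unfolding SC
    by (rule convex_linear_vimage[OF P(1) convex_rel_interior[OF assms(2)]])
  have PS: "P y \<in> C" if "y \<in> S" for y using that rel_interior_subset unfolding SC by auto
  have hcv: "convex_on S (g \<circ> P)"
  proof (rule convex_onI[OF _ Scvx])
    fix t :: real and x y assume t: "0 < t" "t < 1" and xy: "x \<in> S" "y \<in> S"
    have "P ((1 - t) *\<^sub>R x + t *\<^sub>R y) = (1 - t) *\<^sub>R P x + t *\<^sub>R P y"
      using P(1) by (simp add: linear_add linear_scale)
    moreover have "g ((1 - t) *\<^sub>R P x + t *\<^sub>R P y) \<le> (1 - t) * g (P x) + t * g (P y)"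
      using convex_onD[OF gcv, of t "P x" "P y"] PS xy t by (simp add: algebra_simps)
    ultimately show "(g \<circ> P) ((1 - t) *\<^sub>R x + t *\<^sub>R y) \<le> (1 - t) * (g \<circ> P) x + t * (g \<circ> P) y"
      by simp
  qed
  have "continuous_on S (g \<circ> P)" by (rule convex_on_continuous[OF Sopen hcv])
  moreover have sub: "rel_interior C \<subseteq> S"
    using U(2) P(3) unfolding S_def by auto
  ultimately have "continuous_on (rel_interior C) (g \<circ> P)" by (rule continuous_on_subset)
  moreover have "\<And>x. x \<in> rel_interior C \<Longrightarrow> (g \<circ> P) x = g x"
    using U(2) P(3) by auto
  ultimately have gc: "continuous_on (rel_interior C) g" using continuous_on_cong by force
  have "continuous_on (rel_interior C) (\<lambda>x. g x powr \<alpha>)"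
    by (rule continuous_on_powr'[OF gc continuous_on_const]) (use assms(4) in \<open>auto simp: g_def\<close>)
  moreover have "\<And>x. x \<in> rel_interior C \<Longrightarrow> g x powr \<alpha> = f x"
    using assms(3,4) rel_interior_subset[of C] by (force simp: g_def powr_powr)
  ultimately show ?thesis using continuous_on_cong by force
qed

end
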